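(* For each $d,l\ge1$ there exist constants $0<\gamma<1$ and $M\ge1$ (depending only on $d$ and $l$) such that the following holds. Let $B\subset\mathbb{R}^d$ be a ball of radius $1$ and let $\mathbf p=(p_1,p_2):B\to\mathbb{R}^2$ be a polynomial map of degree at most $l$ with $$\sup_{x,y\in B}\|\mathbf p(x)-\mathbf p(y)\|\le2\qquad\text{and}\qquad\sup_{x\in B}\operatorname{dist}(\mathcal L,\mathbf p(x))\ge\tfrac18\ \text{for every straight line }\mathcal L\subset\mathbb{R}^2.$$ Then (a) $\sup_{x\in B}\|\tilde\nabla\mathbf p(x)\|\ge\gamma\big(1+\sup_{x\in B}\|\mathbf p(x)\|\big)$, and (b) $\sup_{x\in B,\ i=1,2}\|\nabla p_i(x)\|\le M$.
   Context: Norms are Euclidean. The skew-gradient of $\mathbf p=(p_1,p_2)$ is $\tilde\nabla\mathbf p(x)=p_1(x)\nabla p_2(x)-p_2(x)\nabla p_1(x)\in\mathbb{R}^d$. *)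

theory Defs
  imports "HOL-Analysis.Analysis"
begin

definition poly_fun_deg_le :: "nat \<Rightarrow> (real^'n \<Rightarrow> real) \<Rightarrow> bool" where
  "poly_fun_deg_le l f \<longleftrightarrow>
     (\<exists>c :: ('n \<Rightarrow> nat) \<Rightarrow> real.
        f = (\<lambda>x. \<Sum>\<alpha>\<in>{\<alpha>. sum \<alpha> UNIV \<le> l}. c \<alpha> * (\<Prod>i\<in>UNIV. (x$i) ^ (\<alpha> i))))"

definition grad :: "(real^'n \<Rightarrow> real) \<Rightarrow> real^'n \<Rightarrow> real^'n" where
  "grad f x = (\<chi> i. frechet_derivative f (at x) (axis i 1))"

definition skew_grad :: "(real^'n \<Rightarrow> real) \<Rightarrow> (real^'n \<Rightarrow> real) \<Rightarrow> real^'n \<Rightarrow> real^'n" where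
  "skew_grad p1 p2 x = p1 x *\<^sub>R grad p2 x - p2 x *\<^sub>R grad p1 x"

definition is_line :: "(real^2) set \<Rightarrow> bool" where
  "is_line L \<longleftrightarrow> (\<exists>a v. v \<noteq> 0 \<and> L = {a + t *\<^sub>R v | t. True})"

definition pmap :: "(real^'n \<Rightarrow> real) \<Rightarrow> (real^'n \<Rightarrow> real) \<Rightarrow> real^'n \<Rightarrow> real^2" where
  "pmap p1 p2 x = vector [p1 x, p2 x]"

end

theory Submission
  imports Defs
begin

definition Ix :: "nat \<Rightarrow> ('n::finite \<Rightarrow> nat) set" where
  "Ix k = {\<alpha>. sum \<alpha> UNIV \<le> k}"

definition mnm :: "('n::finite \<Rightarrow> nat) \<Rightarrow> real^'n \<Rightarrow> real" where
  "mnm \<alpha> x = (\<Prod>i\<in>UNIV. (x$i) ^ (\<alpha> i))"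

definition PP :: "nat \<Rightarrow> (('n::finite \<Rightarrow> nat) \<Rightarrow> real) \<Rightarrow> real^'n \<Rightarrow> real" where
  "PP k c x = (\<Sum>\<alpha>\<in>Ix k. c \<alpha> * mnm \<alpha> x)"

lemma poly_iff: "poly_fun_deg_le k f \<longleftrightarrow> (\<exists>c. f = PP k c)"
  unfolding poly_fun_deg_le_def PP_def Ix_def mnm_def by simp

lemma finite_Ix: "finite (Ix k :: ('n::finite \<Rightarrow> nat) set)"
proof -
  have "Ix k \<subseteq> (PiE UNIV (\<lambda>_::'n. {..k}))"
    unfolding Ix_def PiE_def extensional_def
    by (auto intro: order_trans[OF member_le_sum[where A=UNIV]])
  moreover have "finite (PiE UNIV (\<lambda>_::'n. {..k}))" by (intro finite_PiE) auto
  ultimately show ?thesis by (rule finite_subset)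
qed

lemma zero_Ix: "(\<lambda>_. 0) \<in> Ix k" by (simp add: Ix_def)

lemma mnm_zero[simp]: "mnm (\<lambda>_. 0) x = 1" by (simp add: mnm_def)

lemma PP_add: "PP k (\<lambda>\<alpha>. a * c \<alpha> + b * d \<alpha>) x = a * PP k c x + b * PP k d x"
  by (simp add: PP_def sum.distrib sum_distrib_left algebra_simps)

lemma PP_const: "PP k (\<lambda>\<alpha>. if \<alpha> = (\<lambda>_. 0) then t else 0) x = t"
proof -
  have "PP k (\<lambda>\<alpha>. if \<alpha> = (\<lambda>_. 0) then t else 0) x = (\<Sum>\<alpha>\<in>Ix k. if \<alpha> = (\<lambda>_. 0) then t * mnm \<alpha> x else 0)"
    unfolding PP_def by (rule sum.cong) auto
  also have "\<dots> = t" by (simp add: zero_Ix finite_Ix)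
  finally show ?thesis .
qed

lemma poly_lin:
  assumes "poly_fun_deg_le k f" "poly_fun_deg_le k g"
  shows "poly_fun_deg_le k (\<lambda>y. a * f y + b * g y + t)"
proof -
  obtain c d where c: "f = PP k c" and d: "g = PP k d" using assms by (auto simp: poly_iff)
  let ?e = "\<lambda>\<alpha>. 1 * (a * c \<alpha> + b * d \<alpha>) + 1 * (if \<alpha> = (\<lambda>_. 0) then t else 0)"
  have "(\<lambda>y. a * f y + b * g y + t) = PP k ?e"
    by (rule ext, subst PP_add, subst PP_add, simp add: PP_const c d)
  then show ?thesis by (auto simp: poly_iff)
qed

lemma poly_mono_deg:
  assumes "poly_fun_deg_le k f" "k \<le> k'" shows "poly_fun_deg_le k' f"
proof -
  obtain c where c: "f = PP k c" using assms by (auto simp: poly_iff)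
  have sub: "Ix k \<subseteq> Ix k'" using assms(2) by (auto simp: Ix_def)
  have "f = PP k' (\<lambda>\<alpha>. if \<alpha> \<in> Ix k then c \<alpha> else 0)"
    unfolding c PP_def
    by (rule ext, rule sum.mono_neutral_cong_left[OF finite_Ix sub]) auto
  then show ?thesis by (auto simp: poly_iff)
qed

definition shf :: "'n \<Rightarrow> ('n \<Rightarrow> nat) \<Rightarrow> ('n \<Rightarrow> nat)" where
  "shf i \<alpha> = (\<lambda>j. if j = i then Suc (\<alpha> j) else \<alpha> j)"

lemma shf_inj: "inj (shf i)"
  proof (rule injI)
  fix a b :: "'a \<Rightarrow> nat" assume "shf i a = shf i b"
  then have "\<And>j. shf i a j = shf i b j" by simp
  then show "a = b" by (intro ext) (metis Suc_inject shf_def)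
qed

lemma sum_shf: "sum (shf i \<alpha>) (UNIV::'n::finite set) = Suc (sum \<alpha> UNIV)"
proof -
  have "sum (shf i \<alpha>) (UNIV::'n set) = (\<Sum>j\<in>UNIV. \<alpha> j + (if j = i then 1 else 0))"
    by (rule sum.cong) (auto simp: shf_def)
  also have "\<dots> = sum \<alpha> UNIV + 1" by (simp add: sum.distrib)
  finally show ?thesis by simp
qed

lemma mnm_shf: "mnm (shf i \<alpha>) y = y$i * mnm \<alpha> y"
proof -
  have "mnm (shf i \<alpha>) y = (\<Prod>j\<in>UNIV. (y$j)^(\<alpha> j) * (if j = i then y$j else 1))"
    unfolding mnm_def by (rule prod.cong) (auto simp: shf_def)
  also have "\<dots> = mnm \<alpha> y * y$i" by (simp add: prod.distrib mnm_def)
  finally show ?thesis by simp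
qed

lemma poly_mult_coord:
  assumes "poly_fun_deg_le k f"
  shows "poly_fun_deg_le (Suc k) (\<lambda>y. (a + y$i) * f y)"
proof -
  obtain c where c: "f = PP k c" using assms by (auto simp: poly_iff)
  have p1: "poly_fun_deg_le (Suc k) (\<lambda>y. a * f y)"
    using poly_lin[OF assms assms, of a 0 0] poly_mono_deg by fastforce
  have sub: "shf i ` Ix k \<subseteq> Ix (Suc k)" by (auto simp: Ix_def sum_shf)
  define d where "d = (\<lambda>\<beta>. if \<beta> \<in> shf i ` Ix k then c (inv (shf i) \<beta>) else 0)"
  have "(\<lambda>y. y$i * f y) = PP (Suc k) d"
  proof
    fix y
    have "y$i * f y = (\<Sum>\<alpha>\<in>Ix k. c \<alpha> * mnm (shf i \<alpha>) y)"
      by (simp add: c PP_def sum_distrib_left mnm_shf algebra_simps)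
    also have "\<dots> = (\<Sum>\<beta>\<in>shf i ` Ix k. c (inv (shf i) \<beta>) * mnm \<beta> y)"
      by (subst sum.reindex) (auto intro: inj_on_subset[OF shf_inj] simp: inv_f_f[OF shf_inj])
    also have "\<dots> = PP (Suc k) d y"
      unfolding PP_def d_def
      by (rule sum.mono_neutral_cong_left[OF finite_Ix sub]) auto
    finally show "y$i * f y = PP (Suc k) d y" .
  qed
  then have p2: "poly_fun_deg_le (Suc k) (\<lambda>y. y$i * f y)" by (auto simp: poly_iff)
  show ?thesis using poly_lin[OF p1 p2, of 1 1 0] by (simp add: algebra_simps)
qed

lemma poly_mult_pow:
  assumes "poly_fun_deg_le k f"
  shows "poly_fun_deg_le (k + m) (\<lambda>y. (a + y$i)^m * f y)"
proof (induction m)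
  case 0 then show ?case using assms by simp
next
  case (Suc m)
  from poly_mult_coord[OF Suc, of a i] show ?case by (simp add: algebra_simps)
qed

lemma poly_const: "poly_fun_deg_le k (\<lambda>y. t)"
proof -
  have "(\<lambda>y::real^'n. t) = PP k (\<lambda>\<alpha>. if \<alpha> = (\<lambda>_. 0) then t else 0)"
    by (rule ext, rule PP_const[symmetric])
  then show ?thesis by (auto simp: poly_iff)
qed

lemma poly_prod_shift:
  fixes a :: "real^'n::finite"
  shows "poly_fun_deg_le (sum \<alpha> S) (\<lambda>y. \<Prod>i\<in>S. (a$i + y$i)^(\<alpha> i))"
proof (induction S rule: infinite_finite_induct)
  case (infinite A) then show ?case by (simp add: poly_const)
next
  case empty then show ?case by (simp add: poly_const)
next
  case (insert i F)
  from poly_mult_pow[OF insert(3), of "\<alpha> i" "a$i" i] insert(1,2)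
  show ?case by (simp add: add.commute)
qed

lemma poly_sum:
  assumes "finite A" "\<And>a. a \<in> A \<Longrightarrow> poly_fun_deg_le k (f a)"
  shows "poly_fun_deg_le k (\<lambda>y. \<Sum>a\<in>A. f a y)"
  using assms
proof (induction A rule: finite_induct)
  case empty then show ?case using poly_const[of k 0] by simp
next
  case (insert x F)
  then show ?case using poly_lin[of k "f x" "\<lambda>y. \<Sum>a\<in>F. f a y" 1 1 0] by simp
qed

lemma poly_translate:
  assumes "poly_fun_deg_le k f"
  shows "poly_fun_deg_le k (\<lambda>y. f (a + y))"
proof -
  obtain c where c: "f = PP k c" using assms by (auto simp: poly_iff)
  have eq: "(\<lambda>y. f (a + y)) = (\<lambda>y. \<Sum>\<alpha>\<in>Ix k. c \<alpha> * (\<Prod>i\<in>UNIV. (a$i + y$i)^(\<alpha> i)))"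
    by (simp add: c PP_def mnm_def)
  show ?thesis unfolding eq
  proof (rule poly_sum[OF finite_Ix])
    fix \<alpha> :: "'a \<Rightarrow> nat" assume "\<alpha> \<in> Ix k"
    then have "poly_fun_deg_le k (\<lambda>y. \<Prod>i\<in>UNIV. (a$i + y$i)^(\<alpha> i))"
      using poly_prod_shift[of \<alpha> UNIV a] poly_mono_deg by (auto simp: Ix_def)
    then show "poly_fun_deg_le k (\<lambda>y. c \<alpha> * (\<Prod>i\<in>UNIV. (a$i + y$i)^(\<alpha> i)))"
      using poly_lin[of k _ _ "c \<alpha>" 0 0] by fastforce
  qed
qed

lemma mnm_scale: "mnm \<alpha> (t *\<^sub>R v) = t ^ (sum \<alpha> UNIV) * mnm \<alpha> v"
  by (simp add: mnm_def power_mult_distrib prod.distrib power_sum)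

lemma PP_ray: "\<exists>b. \<forall>t. PP k c (t *\<^sub>R v) = (\<Sum>j\<le>k. b j * t^j)"
proof -
  define b where "b = (\<lambda>j. \<Sum>\<alpha>\<in>{\<alpha>\<in>Ix k. sum \<alpha> UNIV = j}. c \<alpha> * mnm \<alpha> v)"
  have "PP k c (t *\<^sub>R v) = (\<Sum>j\<le>k. b j * t^j)" for t
  proof -
    have "PP k c (t *\<^sub>R v) = (\<Sum>\<alpha>\<in>Ix k. c \<alpha> * mnm \<alpha> v * t ^ sum \<alpha> UNIV)"
      by (simp add: PP_def mnm_scale algebra_simps)
    also have "\<dots> = (\<Sum>j\<le>k. \<Sum>\<alpha>\<in>{\<alpha>\<in>Ix k. sum \<alpha> UNIV = j}. c \<alpha> * mnm \<alpha> v * t ^ sum \<alpha> UNIV)"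
      apply (rule sum.group[symmetric])
        apply (rule finite_Ix)
       apply simp
      apply (auto simp: Ix_def)
      done
    also have "\<dots> = (\<Sum>j\<le>k. b j * t^j)"
      unfolding b_def sum_distrib_right by (rule sum.cong, simp, rule sum.cong) auto
    finally show ?thesis .
  qed
  then show ?thesis by blast
qed

lemma poly_identity:
  assumes "poly_fun_deg_le k f" "0 < \<delta>" "\<And>y. y \<in> ball x0 \<delta> \<Longrightarrow> f y = 0"
  shows "f z = 0"
proof -
  obtain c where c: "(\<lambda>y. f (x0 + y)) = PP k c"
    using poly_translate[OF assms(1), of x0] by (auto simp: poly_iff)
  define v where "v = z - x0"
  obtain b where b: "\<And>t. PP k c (t *\<^sub>R v) = (\<Sum>j\<le>k. b j * t^j)" using PP_ray by blast
  have fz: "f (x0 + t *\<^sub>R v) = (\<Sum>j\<le>k. b j * t^j)" for t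
    using b[of t] fun_cong[OF c, of "t *\<^sub>R v"] by simp
  have "{t. \<bar>t\<bar> < \<delta> / (norm v + 1)} \<subseteq> {t. (\<Sum>j\<le>k. b j * t^j) = 0}"
  proof
    fix t assume "t \<in> {t. \<bar>t\<bar> < \<delta> / (norm v + 1)}"
    moreover have "norm v + 1 > 0" by (smt (verit) norm_ge_zero)
    ultimately have "\<bar>t\<bar> * (norm v + 1) < \<delta>"
      by (simp add: pos_less_divide_eq)
    then have "\<bar>t\<bar> * norm v < \<delta>" by (smt (verit) abs_ge_zero mult_nonneg_nonneg norm_ge_zero distrib_left)
    then have "x0 + t *\<^sub>R v \<in> ball x0 \<delta>" by (simp add: dist_norm)
    then have "f (x0 + t *\<^sub>R v) = 0" by (rule assms(3))
    then show "t \<in> {t. (\<Sum>j\<le>k. b j * t^j) = 0}" using fz[of t] by simp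
  qed
  moreover have "infinite {t::real. \<bar>t\<bar> < \<delta> / (norm v + 1)}"
  proof -
    have "{t::real. \<bar>t\<bar> < \<delta> / (norm v + 1)} \<supseteq> {0<..<\<delta> / (norm v + 1)}" by auto
    moreover have "\<delta> / (norm v + 1) > 0" using assms(2) by (smt (verit) norm_ge_zero divide_pos_pos)
    ultimately show ?thesis using infinite_Ioo infinite_super by blast
  qed
  ultimately have "infinite {t. (\<Sum>j\<le>k. b j * t^j) = 0}" using infinite_super by blast
  then have "\<forall>j\<le>k. b j = 0" using polyfun_finite_roots by blast
  then show ?thesis using fz[of 1] by (simp add: v_def)
qed

lemma BW_finite:
  fixes x :: "nat \<Rightarrow> 'a \<Rightarrow> real"
  assumes "finite A" "\<And>m a. a \<in> A \<Longrightarrow> \<bar>x m a\<bar> \<le> B"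
  shows "\<exists>r L. strict_mono r \<and> (\<forall>a\<in>A. (\<lambda>m. x (r m) a) \<longlonglongrightarrow> L a)"
  using assms
proof (induction A rule: finite_induct)
  case empty
  show ?case by (rule exI[of _ id]) (auto simp: strict_mono_def)
next
  case (insert a F)
  from insert.IH insert.prems obtain r L where r: "strict_mono r"
    and L: "\<forall>a\<in>F. (\<lambda>m. x (r m) a) \<longlonglongrightarrow> L a" by auto
  have "bounded (range (\<lambda>m. x (r m) a))"
    unfolding bounded_iff using insert.prems by auto
  from bounded_imp_convergent_subsequence[OF this] obtain l r2 where
    r2: "strict_mono r2" and l: "((\<lambda>m. x (r m) a) \<circ> r2) \<longlonglongrightarrow> l" by blast
  have "strict_mono (r \<circ> r2)" using r r2 by (rule strict_mono_o)
  moreover have "\<forall>a'\<in>insert a F. (\<lambda>m. x ((r \<circ> r2) m) a') \<longlonglongrightarrow> (L(a := l)) a'"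
  proof
    fix a' assume "a' \<in> insert a F"
    then show "(\<lambda>m. x ((r \<circ> r2) m) a') \<longlonglongrightarrow> (L(a := l)) a'"
    proof
      assume "a' = a" then show ?thesis using l by (simp add: comp_def)
    next
      assume "a' \<in> F"
      then have "((\<lambda>m. x (r m) a') \<circ> r2) \<longlonglongrightarrow> L a'"
        using L r2 by (intro LIMSEQ_subseq_LIMSEQ) auto
      then show ?thesis using \<open>a' \<in> F\<close> insert.hyps(2) by (auto simp: comp_def)
    qed
  qed
  ultimately show ?case by blast
qed

definition nrm :: "nat \<Rightarrow> (('n::finite \<Rightarrow> nat) \<Rightarrow> real) \<Rightarrow> real" where
  "nrm k c = (\<Sum>\<alpha>\<in>Ix k. \<bar>c \<alpha>\<bar>)"

lemma nrm_nonneg: "0 \<le> nrm k c" by (simp add: nrm_def sum_nonneg)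

lemma coeff_le_nrm: "\<alpha> \<in> Ix k \<Longrightarrow> \<bar>c \<alpha>\<bar> \<le> nrm k c"
  unfolding nrm_def by (rule member_le_sum) (auto simp: finite_Ix)

lemma nrm_scale: "nrm k (\<lambda>\<alpha>. a * c \<alpha>) = \<bar>a\<bar> * nrm k c"
  by (simp add: nrm_def abs_mult sum_distrib_left)

lemma PP_tendsto:
  assumes "\<forall>\<alpha>\<in>Ix k. (\<lambda>m. c m \<alpha>) \<longlonglongrightarrow> d \<alpha>"
  shows "(\<lambda>m. PP k (c m) x) \<longlonglongrightarrow> PP k d x"
  unfolding PP_def using assms by (intro tendsto_sum tendsto_mult tendsto_const) auto

lemma nrm_tendsto:
  assumes "\<forall>\<alpha>\<in>Ix k. (\<lambda>m. c m \<alpha>) \<longlonglongrightarrow> d \<alpha>"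
  shows "(\<lambda>m. nrm k (c m)) \<longlonglongrightarrow> nrm k d"
  unfolding nrm_def using assms by (intro tendsto_sum tendsto_rabs) auto

lemma nrm_diff_tendsto:
  assumes "\<forall>\<alpha>\<in>Ix k. (\<lambda>m. c m \<alpha>) \<longlonglongrightarrow> d \<alpha>"
  shows "(\<lambda>m. nrm k (\<lambda>\<alpha>. c m \<alpha> - d \<alpha>)) \<longlonglongrightarrow> 0"
proof -
  have "\<forall>\<alpha>\<in>Ix k. (\<lambda>m. c m \<alpha> - d \<alpha>) \<longlonglongrightarrow> 0"
    using assms by (auto intro: tendsto_eq_intros)
  from nrm_tendsto[OF this] show ?thesis by (simp add: nrm_def)
qed

lemma mnm_le1:
  assumes "norm x \<le> 1" shows "\<bar>mnm \<alpha> x\<bar> \<le> 1"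
proof -
  have "\<bar>mnm \<alpha> x\<bar> = (\<Prod>i\<in>UNIV. \<bar>x$i\<bar> ^ \<alpha> i)" by (simp add: mnm_def abs_prod power_abs)
  also have "\<dots> \<le> 1"
  proof (rule prod_le_1)
    fix i
    have "\<bar>x$i\<bar> \<le> 1" using component_le_norm_cart[of x i] assms by linarith
    then show "0 \<le> \<bar>x$i\<bar> ^ \<alpha> i \<and> \<bar>x$i\<bar> ^ \<alpha> i \<le> 1" by (simp add: power_le_one)
  qed
  finally show ?thesis .
qed

lemma PP_diff_le:
  assumes "norm x \<le> 1"
  shows "\<bar>PP k c x - PP k d x\<bar> \<le> nrm k (\<lambda>\<alpha>. c \<alpha> - d \<alpha>)"
proof -
  have "\<bar>PP k c x - PP k d x\<bar> = \<bar>\<Sum>\<alpha>\<in>Ix k. (c \<alpha> - d \<alpha>) * mnm \<alpha> x\<bar>"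
    by (simp add: PP_def sum_subtractf[symmetric] algebra_simps)
  also have "\<dots> \<le> (\<Sum>\<alpha>\<in>Ix k. \<bar>(c \<alpha> - d \<alpha>) * mnm \<alpha> x\<bar>)" by (rule sum_abs)
  also have "\<dots> \<le> (\<Sum>\<alpha>\<in>Ix k. \<bar>c \<alpha> - d \<alpha>\<bar>)"
    by (rule sum_mono) (simp add: abs_mult mult_left_le mnm_le1[OF assms])
  finally show ?thesis by (simp add: nrm_def)
qed

lemma PP_le_nrm: "norm x \<le> 1 \<Longrightarrow> \<bar>PP k c x\<bar> \<le> nrm k c"
  using PP_diff_le[of x k c "\<lambda>_. 0"] by (simp add: PP_def)

lemma inv_Suc_tendsto: "(\<lambda>m. a + b * inverse (real (Suc m))) \<longlonglongrightarrow> a"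
  using tendsto_add[OF tendsto_const tendsto_mult[OF tendsto_const LIMSEQ_inverse_real_of_nat], of a b]
  by simp

lemma min_rep:
  "\<exists>c'. PP k c' = PP k c \<and> (\<forall>c''. PP k c'' = PP k c \<longrightarrow> nrm k c' \<le> nrm k c'')"
proof -
  define S where "S = {nrm k d | d. PP k d = PP k c}"
  define s where "s = Inf S"
  have ne: "S \<noteq> {}" unfolding S_def by blast
  have bdd: "bdd_below S" unfolding S_def bdd_below_def using nrm_nonneg by blast
  have low: "s \<le> nrm k d" if "PP k d = PP k c" for d
    unfolding s_def using that bdd by (intro cInf_lower) (auto simp: S_def)
  have "\<exists>d. PP k d = PP k c \<and> nrm k d < s + inverse (real (Suc m))" for m
  proof -
    have "Inf S < s + inverse (real (Suc m))" by (simp add: s_def)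
    from cInf_lessD[OF ne this] show ?thesis by (auto simp: S_def)
  qed
  then obtain d where d: "\<And>m. PP k (d m) = PP k c" "\<And>m. nrm k (d m) < s + inverse (real (Suc m))"
    by metis
  have bnd: "\<bar>d m \<alpha>\<bar> \<le> s + 1" if "\<alpha> \<in> Ix k" for m \<alpha>
  proof -
    have "inverse (real (Suc m)) \<le> 1" by (simp add: inverse_le_1_iff)
    then show ?thesis using coeff_le_nrm[OF that, of "d m"] d(2)[of m] by linarith
  qed
  obtain r L where r: "strict_mono r" and L: "\<forall>\<alpha>\<in>Ix k. (\<lambda>m. d (r m) \<alpha>) \<longlonglongrightarrow> L \<alpha>"
    using BW_finite[OF finite_Ix, where x=d and B="s + 1"] bnd by blast
  have PL: "PP k L = PP k c"
  proof
    fix x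
    have "(\<lambda>m. PP k (d (r m)) x) \<longlonglongrightarrow> PP k L x" using PP_tendsto[OF L] .
    moreover have "(\<lambda>m. PP k (d (r m)) x) = (\<lambda>m. PP k c x)" using d(1) by simp
    ultimately show "PP k L x = PP k c x" using LIMSEQ_unique tendsto_const by metis
  qed
  have "nrm k L \<le> s"
  proof (rule LIMSEQ_le[OF nrm_tendsto[OF L] inv_Suc_tendsto[of s 1]])
    show "\<exists>N. \<forall>n\<ge>N. nrm k (d (r n)) \<le> s + 1 * inverse (real (Suc n))"
    proof (intro exI allI impI)
      fix n
      have "n \<le> r n" using r by (rule seq_suble)
      then have inv: "inverse (real (Suc (r n))) \<le> inverse (real (Suc n))"
        by (intro le_imp_inverse_le) auto
      show "nrm k (d (r n)) \<le> s + 1 * inverse (real (Suc n))" using d(2)[of "r n"] inv by linarith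
    qed
  qed
  then show ?thesis using PL low by (intro exI[of _ L]) force
qed


lemma PP_div: "PP k (\<lambda>\<alpha>. d \<alpha> / N) x = PP k d x / N"
  by (simp add: PP_def sum_divide_distrib)

lemma norm_equiv:
  "\<exists>C. \<forall>c::('n::finite \<Rightarrow> nat) \<Rightarrow> real. (\<forall>x\<in>ball 0 1. \<bar>PP k c x\<bar> \<le> 2) \<longrightarrow>
      (\<exists>c'. PP k c' = PP k c \<and> nrm k c' \<le> C)"
proof (rule ccontr)
  assume "\<not> ?thesis"
  then have "\<forall>m::nat. \<exists>c::('n \<Rightarrow> nat) \<Rightarrow> real. (\<forall>x\<in>ball 0 1. \<bar>PP k c x\<bar> \<le> 2) \<and>
      (\<forall>c'. PP k c' = PP k c \<longrightarrow> nrm k c' > real m + 1)"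
    by (metis not_le)
  then obtain c :: "nat \<Rightarrow> ('n \<Rightarrow> nat) \<Rightarrow> real" where
    c1: "\<And>m x. x \<in> ball 0 1 \<Longrightarrow> \<bar>PP k (c m) x\<bar> \<le> 2" and
    c2: "\<And>m c'. PP k c' = PP k (c m) \<Longrightarrow> nrm k c' > real m + 1"
    by metis
  have "\<forall>m. \<exists>d. PP k d = PP k (c m) \<and> (\<forall>c''. PP k c'' = PP k (c m) \<longrightarrow> nrm k d \<le> nrm k c'')"
    using min_rep by blast
  then obtain d where d1: "\<And>m. PP k (d m) = PP k (c m)"
    and d2: "\<And>m c''. PP k c'' = PP k (c m) \<Longrightarrow> nrm k (d m) \<le> nrm k c''"
    by metis
  define N where "N m = nrm k (d m)" for m
  have N: "N m > real m + 1" for m using c2[OF d1] by (simp add: N_def)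
  then have Npos: "N m > 0" for m by (smt (verit) of_nat_0_le_iff)
  define e where "e m = (\<lambda>\<alpha>. d m \<alpha> / N m)" for m
  have ne: "nrm k (e m) = 1" for m
    using nrm_scale[of k "inverse (N m)" "d m"] Npos[of m]
    by (simp add: e_def N_def divide_inverse mult.commute)
  have eb: "\<bar>e m \<alpha>\<bar> \<le> 1" if "\<alpha> \<in> Ix k" for m \<alpha> using coeff_le_nrm[OF that, of "e m"] ne by simp
  obtain r E where r: "strict_mono r" and E: "\<forall>\<alpha>\<in>Ix k. (\<lambda>m. e (r m) \<alpha>) \<longlonglongrightarrow> E \<alpha>"
    using BW_finite[OF finite_Ix, where x=e and B=1] eb by blast
  have PE0: "PP k E x = 0" if "x \<in> ball 0 1" for x
  proof -
    have "(\<lambda>m. PP k (e (r m)) x) \<longlonglongrightarrow> 0"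
    proof (rule Lim_null_comparison)
      show "\<forall>\<^sub>F m in sequentially. norm (PP k (e (r m)) x) \<le> 2 * inverse (real (Suc m))"
      proof (rule always_eventually, rule allI)
        fix m
        have "\<bar>PP k (e (r m)) x\<bar> = \<bar>PP k (c (r m)) x\<bar> / N (r m)"
          using Npos[of "r m"] by (simp add: e_def PP_div d1)
        also have "\<dots> \<le> 2 / N (r m)"
          using c1[OF that] Npos[of "r m"] by (simp add: divide_right_mono)
        also have "\<dots> \<le> 2 / (real m + 1)"
        proof -
          have "real m \<le> real (r m)" using seq_suble[OF r, of m] by simp
          then have "real m + 1 \<le> N (r m)" using N[of "r m"] by linarith
          then show ?thesis by (intro divide_left_mono) auto
        qed
        finally show "norm (PP k (e (r m)) x) \<le> 2 * inverse (real (Suc m))"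
          by (simp add: divide_inverse add.commute)
      qed
      show "(\<lambda>m. 2 * inverse (real (Suc m))) \<longlonglongrightarrow> 0"
        using inv_Suc_tendsto[of 0 2] by simp
    qed
    moreover have "(\<lambda>m. PP k (e (r m)) x) \<longlonglongrightarrow> PP k E x" using PP_tendsto[OF E] .
    ultimately show ?thesis using LIMSEQ_unique by blast
  qed
  have PEz: "PP k E z = 0" for z
    by (rule poly_identity[of k "PP k E" 1 0]) (auto simp: poly_iff PE0)
  have "nrm k E = 1"
    using nrm_tendsto[OF E] ne by (simp add: LIMSEQ_const_iff)
  have ge1: "1 \<le> nrm k (\<lambda>\<alpha>. e (r m) \<alpha> - E \<alpha>)" for m
  proof -
    define d' where "d' = (\<lambda>\<alpha>. N (r m) * (e (r m) \<alpha> - E \<alpha>))"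
    have dd: "d (r m) \<alpha> = N (r m) * e (r m) \<alpha>" for \<alpha> using Npos[of "r m"] by (simp add: e_def)
    have "PP k d' = PP k (c (r m))"
    proof
      fix x
      have "PP k d' x = PP k (\<lambda>\<alpha>. 1 * d (r m) \<alpha> + (- N (r m)) * E \<alpha>) x"
        unfolding d'_def by (simp add: dd algebra_simps)
      also have "\<dots> = PP k (c (r m)) x" by (simp only: PP_add PEz d1)
      finally show "PP k d' x = PP k (c (r m)) x" .
    qed
    from d2[OF this] have "N (r m) \<le> N (r m) * nrm k (\<lambda>\<alpha>. e (r m) \<alpha> - E \<alpha>)"
      unfolding d'_def N_def[of "r m", symmetric] nrm_scale using Npos[of "r m"] by simp
    then show ?thesis using Npos[of "r m"] by simp
  qed
  have "(\<lambda>m. nrm k (\<lambda>\<alpha>. e (r m) \<alpha> - E \<alpha>)) \<longlonglongrightarrow> 0" using nrm_diff_tendsto[OF E] .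
  then have "eventually (\<lambda>m. nrm k (\<lambda>\<alpha>. e (r m) \<alpha> - E \<alpha>) < 1) sequentially"
    by (rule order_tendstoD) simp
  then show False using ge1 by (auto simp: not_less[symmetric] dest: eventually_happens)
qed

definition gm :: "('n::finite \<Rightarrow> nat) \<Rightarrow> real^'n \<Rightarrow> real^'n" where
  "gm \<alpha> y = (\<chi> i. real (\<alpha> i) * (y$i)^(\<alpha> i - 1) * (\<Prod>j\<in>UNIV-{i}. (y$j)^(\<alpha> j)))"

lemma mnm_deriv: "(mnm \<alpha> has_derivative (\<lambda>h. gm \<alpha> y \<bullet> h)) (at y)"
proof -
  have c: "((\<lambda>x::real^'a. x$i) has_derivative (\<lambda>h. h$i)) (at y)" for i
    by (rule bounded_linear_imp_has_derivative) (rule bounded_linear_vec_nth)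
  have "((\<lambda>x. \<Prod>i\<in>UNIV. (x$i)^(\<alpha> i)) has_derivative
     (\<lambda>h. \<Sum>i\<in>UNIV. (of_nat (\<alpha> i) * h$i * (y$i)^(\<alpha> i - 1)) * (\<Prod>j\<in>UNIV-{i}. (y$j)^(\<alpha> j)))) (at y)"
    by (rule has_derivative_prod) (rule has_derivative_power[OF c])
  moreover have "(\<lambda>h. \<Sum>i\<in>UNIV. (of_nat (\<alpha> i) * h$i * (y$i)^(\<alpha> i - 1)) * (\<Prod>j\<in>UNIV-{i}. (y$j)^(\<alpha> j)))
     = (\<lambda>h. gm \<alpha> y \<bullet> h)"
    by (rule ext) (simp add: gm_def inner_vec_def algebra_simps)
  ultimately show ?thesis unfolding mnm_def[abs_def] by simp
qed

definition GP :: "nat \<Rightarrow> (('n::finite \<Rightarrow> nat) \<Rightarrow> real) \<Rightarrow> real^'n \<Rightarrow> real^'n" where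
  "GP k c y = (\<Sum>\<alpha>\<in>Ix k. c \<alpha> *\<^sub>R gm \<alpha> y)"

lemma PP_deriv: "(PP k c has_derivative (\<lambda>h. GP k c y \<bullet> h)) (at y)"
proof -
  have "((\<lambda>x. \<Sum>\<alpha>\<in>Ix k. c \<alpha> * mnm \<alpha> x) has_derivative (\<lambda>h. \<Sum>\<alpha>\<in>Ix k. c \<alpha> * (gm \<alpha> y \<bullet> h))) (at y)"
    by (intro has_derivative_sum has_derivative_mult_right mnm_deriv)
  moreover have "(\<lambda>h. \<Sum>\<alpha>\<in>Ix k. c \<alpha> * (gm \<alpha> y \<bullet> h)) = (\<lambda>h. GP k c y \<bullet> h)"
    by (rule ext) (simp add: GP_def inner_sum_left)
  ultimately show ?thesis unfolding PP_def[abs_def] by simp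
qed

lemma shifted_deriv:
  "((\<lambda>x. t + PP k c (x - a)) has_derivative (\<lambda>h. GP k c (x - a) \<bullet> h)) (at x)"
proof -
  have d1: "((\<lambda>x. x - a) has_derivative (\<lambda>h. h)) (at x)"
    by (intro derivative_eq_intros) auto
  have "((PP k c \<circ> (\<lambda>x. x - a)) has_derivative ((\<lambda>h. GP k c (x - a) \<bullet> h) \<circ> (\<lambda>h. h))) (at x)"
    by (rule diff_chain_at[OF d1 PP_deriv])
  then have "((\<lambda>x. PP k c (x - a)) has_derivative (\<lambda>h. GP k c (x - a) \<bullet> h)) (at x)"
    by (simp add: comp_def)
  then show ?thesis by (intro derivative_eq_intros) auto
qed

lemma grad_eq:
  assumes "(f has_derivative (\<lambda>h. G \<bullet> h)) (at y)"
  shows "grad f y = G"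
proof -
  have "frechet_derivative f (at y) = (\<lambda>h. G \<bullet> h)" using frechet_derivative_at[OF assms] by simp
  then show ?thesis by (simp add: grad_def vec_eq_iff inner_axis)
qed

lemma gm_bound:
  assumes "norm y \<le> 1" shows "norm (gm \<alpha> y) \<le> real (sum \<alpha> UNIV)"
proof -
  have "norm (gm \<alpha> y) \<le> (\<Sum>i\<in>UNIV. \<bar>gm \<alpha> y $ i\<bar>)" by (rule norm_le_l1_cart)
  also have "\<dots> \<le> (\<Sum>i\<in>UNIV. real (\<alpha> i))"
  proof (rule sum_mono)
    fix i
    have yj: "\<bar>y$j\<bar> \<le> 1" for j using component_le_norm_cart[of y j] assms by linarith
    have "\<bar>(y$i)^(\<alpha> i - 1)\<bar> \<le> 1" using yj[of i] by (simp add: power_abs power_le_one)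
    moreover have "\<bar>\<Prod>j\<in>UNIV-{i}. (y$j)^(\<alpha> j)\<bar> \<le> 1"
      unfolding abs_prod by (rule prod_le_1) (simp add: power_abs power_le_one yj)
    ultimately have "\<bar>(y$i)^(\<alpha> i - 1) * (\<Prod>j\<in>UNIV-{i}. (y$j)^(\<alpha> j))\<bar> \<le> 1"
      by (simp add: abs_mult mult_le_one)
    then have "real (\<alpha> i) * \<bar>(y$i)^(\<alpha> i - 1) * (\<Prod>j\<in>UNIV-{i}. (y$j)^(\<alpha> j))\<bar> \<le> real (\<alpha> i) * 1"
      by (intro mult_left_mono) auto
    then show "\<bar>gm \<alpha> y $ i\<bar> \<le> real (\<alpha> i)"
      by (simp add: gm_def abs_mult mult.assoc)
  qed
  finally show ?thesis by simp
qed

lemma GP_bound: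
  assumes "norm y \<le> 1" shows "norm (GP k c y) \<le> nrm k c * real k"
proof -
  have "norm (GP k c y) \<le> (\<Sum>\<alpha>\<in>Ix k. norm (c \<alpha> *\<^sub>R gm \<alpha> y))" unfolding GP_def by (rule norm_sum)
  also have "\<dots> \<le> (\<Sum>\<alpha>\<in>Ix k. \<bar>c \<alpha>\<bar> * real k)"
  proof (rule sum_mono)
    fix \<alpha> :: "'a \<Rightarrow> nat" assume "\<alpha> \<in> Ix k"
    then have "real (sum \<alpha> UNIV) \<le> real k" unfolding Ix_def of_nat_le_iff by simp
    then have "norm (gm \<alpha> y) \<le> real k" using gm_bound[OF assms, of \<alpha>] by linarith
    then show "norm (c \<alpha> *\<^sub>R gm \<alpha> y) \<le> \<bar>c \<alpha>\<bar> * real k" by (simp add: mult_left_mono)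
  qed
  finally show ?thesis by (simp add: nrm_def sum_distrib_right)
qed

lemma GP_tendsto:
  assumes "\<forall>\<alpha>\<in>Ix k. (\<lambda>m. c m \<alpha>) \<longlonglongrightarrow> d \<alpha>"
  shows "(\<lambda>m. GP k (c m) x) \<longlonglongrightarrow> GP k d x"
  unfolding GP_def using assms by (intro tendsto_sum tendsto_scaleR tendsto_const) auto

lemma vector2_eq: "(vector [x1, x2] :: real^2) = vector [y1, y2] \<longleftrightarrow> x1 = y1 \<and> x2 = y2"
  by (auto simp: vec_eq_iff forall_2)

lemma is_line_mk:
  assumes "a1 \<noteq> 0 \<or> a2 \<noteq> 0"
  shows "is_line {s + t *\<^sub>R (vector [a1, a2] :: real^2) | t. True}"
proof -
  have "(vector [a1, a2] :: real^2) \<noteq> 0" using assms by (auto simp: vec_eq_iff forall_2)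
  then show ?thesis unfolding is_line_def by blast
qed

lemma on_line2:
  assumes "a1 \<noteq> 0 \<or> a2 \<noteq> 0" "a1 * z2 = a2 * z1"
  shows "(vector [z1 - v1, z2 - v2] :: real^2) \<in> {vector [- v1, - v2] + t *\<^sub>R (vector [a1, a2] :: real^2) | t. True}"
proof -
  obtain t where t: "z1 = t * a1" "z2 = t * a2"
  proof (cases "a1 = 0")
    case True
    then have "a2 \<noteq> 0" using assms by simp
    moreover have "z1 = 0" using assms(2) True \<open>a2 \<noteq> 0\<close> by simp
    ultimately show ?thesis using True that[of "z2 / a2"] by simp
  next
    case False
    then show ?thesis using that[of "z1 / a1"] assms(2) by (simp add: field_simps)
  qed
  have "(vector [z1 - v1, z2 - v2] :: real^2) = vector [- v1, - v2] + t *\<^sub>R vector [a1, a2]"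
    using t by (simp add: vec_eq_iff forall_2)
  then show ?thesis by blast
qed

lemma core:
  assumes p1: "poly_fun_deg_le l P1" and p2: "poly_fun_deg_le l P2"
    and d1: "\<And>y. (P1 has_derivative (\<lambda>h. G1 y \<bullet> h)) (at y)"
    and d2: "\<And>y. (P2 has_derivative (\<lambda>h. G2 y \<bullet> h)) (at y)"
    and sg: "\<forall>y\<in>ball 0 1. P1 y *\<^sub>R G2 y - P2 y *\<^sub>R G1 y = 0"
    and y0: "y0 \<in> ball 0 1" and nz: "P1 y0 \<noteq> 0"
  shows "P1 y0 * P2 z - P2 y0 * P1 z = 0"
proof -
  have "isCont P1 y0" using d1[of y0] by (rule has_derivative_continuous)
  then have "eventually (\<lambda>y. P1 y \<noteq> 0) (at y0)"
    using nz by (intro tendsto_imp_eventually_ne) (auto simp: isCont_def)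
  then obtain d where d: "d > 0" "\<And>y. y \<noteq> y0 \<Longrightarrow> dist y y0 < d \<Longrightarrow> P1 y \<noteq> 0"
    unfolding eventually_at by auto
  define \<delta> where "\<delta> = min d (1 - norm y0)"
  have \<delta>: "\<delta> > 0" using d y0 by (simp add: \<delta>_def)
  have sub: "ball y0 \<delta> \<subseteq> ball 0 1"
  proof
    fix y assume "y \<in> ball y0 \<delta>"
    then have "norm (y - y0) < 1 - norm y0" by (simp add: \<delta>_def dist_norm norm_minus_commute)
    then have "norm y < 1" using norm_triangle_sub[of y y0] by linarith
    then show "y \<in> ball 0 1" by simp
  qed
  have nz': "P1 y \<noteq> 0" if "y \<in> ball y0 \<delta>" for y
    using d(2)[of y] that nz by (cases "y = y0") (auto simp: \<delta>_def dist_commute)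
  have "\<exists>k. \<forall>y\<in>ball y0 \<delta>. P2 y / P1 y = k"
  proof (rule has_derivative_zero_constant)
    fix y assume y: "y \<in> ball y0 \<delta>"
    have "((\<lambda>x. P2 x / P1 x) has_derivative
        (\<lambda>h. ((G2 y \<bullet> h) * P1 y - P2 y * (G1 y \<bullet> h)) / (P1 y * P1 y))) (at y within ball y0 \<delta>)"
      by (rule has_derivative_divide'[OF has_derivative_at_withinI[OF d2] has_derivative_at_withinI[OF d1] nz'[OF y]])
    moreover have "(\<lambda>h. ((G2 y \<bullet> h) * P1 y - P2 y * (G1 y \<bullet> h)) / (P1 y * P1 y)) = (\<lambda>h. 0)"
    proof
      fix h
      have "(P1 y *\<^sub>R G2 y - P2 y *\<^sub>R G1 y) \<bullet> h = 0" using sg sub y by auto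
      then have "(G2 y \<bullet> h) * P1 y - P2 y * (G1 y \<bullet> h) = 0" by (simp add: inner_diff_left algebra_simps)
      then show "((G2 y \<bullet> h) * P1 y - P2 y * (G1 y \<bullet> h)) / (P1 y * P1 y) = 0" by simp
    qed
    ultimately show "((\<lambda>x. P2 x / P1 x) has_derivative (\<lambda>h. 0)) (at y within ball y0 \<delta>)" by simp
  qed (simp add: convex_ball)
  then obtain k where k: "\<And>y. y \<in> ball y0 \<delta> \<Longrightarrow> P2 y / P1 y = k" by blast
  have k0: "P2 y0 / P1 y0 = k" using k \<delta> by simp
  have zero: "P1 y0 * P2 y + (- P2 y0) * P1 y + 0 = 0" if "y \<in> ball y0 \<delta>" for y
  proof -
    have "P2 y = k * P1 y" using k[OF that] nz'[OF that] by (simp add: field_simps)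
    moreover have "P2 y0 = k * P1 y0" using k0 nz by (simp add: field_simps)
    ultimately show ?thesis by simp
  qed
  have "poly_fun_deg_le l (\<lambda>y. P1 y0 * P2 y + (- P2 y0) * P1 y + 0)" by (rule poly_lin[OF p2 p1])
  from poly_identity[OF this \<delta> zero] have "P1 y0 * P2 z + (- P2 y0) * P1 z + 0 = 0" .
  then show ?thesis by simp
qed


lemma nondeg:
  fixes b1 b2 :: "('n::finite \<Rightarrow> nat) \<Rightarrow> real"
  assumes z1: "PP l b1 0 = 0" and z2: "PP l b2 0 = 0" and w: "0 \<le> w"
    and u: "w = 0 \<Longrightarrow> u1 \<noteq> 0 \<or> u2 \<noteq> 0"
    and G: "\<forall>y\<in>ball 0 1. u1 *\<^sub>R GP l b2 y - u2 *\<^sub>R GP l b1 y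
        + w *\<^sub>R (PP l b1 y *\<^sub>R GP l b2 y - PP l b2 y *\<^sub>R GP l b1 y) = 0"
  shows "\<exists>L. is_line L \<and> (\<forall>y\<in>ball 0 1. pmap (PP l b1) (PP l b2) y \<in> L)"
proof (cases "w = 0")
  case True
  then have u: "u1 \<noteq> 0 \<or> u2 \<noteq> 0" using u by simp
  have "\<exists>k. \<forall>y\<in>ball 0 1. u1 * PP l b2 y - u2 * PP l b1 y = k"
  proof (rule has_derivative_zero_constant)
    fix y :: "real^'n" assume y: "y \<in> ball 0 1"
    have "((\<lambda>x. u1 * PP l b2 x - u2 * PP l b1 x) has_derivative
        (\<lambda>h. u1 * (GP l b2 y \<bullet> h) - u2 * (GP l b1 y \<bullet> h))) (at y)"
      by (intro has_derivative_diff has_derivative_mult_right PP_deriv)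
    moreover have "(\<lambda>h. u1 * (GP l b2 y \<bullet> h) - u2 * (GP l b1 y \<bullet> h)) = (\<lambda>h. 0)"
    proof
      fix h
      have "(u1 *\<^sub>R GP l b2 y - u2 *\<^sub>R GP l b1 y) \<bullet> h = 0" using G y True by simp
      then show "u1 * (GP l b2 y \<bullet> h) - u2 * (GP l b1 y \<bullet> h) = 0" by (simp add: inner_diff_left)
    qed
    ultimately show "((\<lambda>x. u1 * PP l b2 x - u2 * PP l b1 x) has_derivative (\<lambda>h. 0)) (at y within ball 0 1)"
      using has_derivative_at_withinI by fastforce
  qed simp
  then obtain k where k: "\<And>y. y \<in> ball 0 1 \<Longrightarrow> u1 * PP l b2 y - u2 * PP l b1 y = k" by blast
  have "k = 0" using k[of 0] z1 z2 by simp
  define L where "L = {vector [- 0, - 0] + t *\<^sub>R (vector [u1, u2] :: real^2) | t. True}"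
  show ?thesis
  proof (intro exI conjI ballI)
    show "is_line L" unfolding L_def by (rule is_line_mk[OF u])
    fix y :: "real^'n" assume "y \<in> ball 0 1"
    then have "u1 * PP l b2 y = u2 * PP l b1 y" using k \<open>k = 0\<close> by force
    from on_line2[OF u this, of 0 0] show "pmap (PP l b1) (PP l b2) y \<in> L"
      by (simp add: pmap_def L_def)
  qed
next
  case False
  then have wp: "w > 0" using w by simp
  define P1 where "P1 = (\<lambda>y. u1 / w + PP l b1 y)"
  define P2 where "P2 = (\<lambda>y. u2 / w + PP l b2 y)"
  have wi: "w * (inverse w * x) = x" for x using wp by simp
  have sg: "\<forall>y\<in>ball 0 1. P1 y *\<^sub>R GP l b2 y - P2 y *\<^sub>R GP l b1 y = 0"
  proof
    fix y :: "real^'n" assume "y \<in> ball 0 1"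
    then have e: "u1 *\<^sub>R GP l b2 y - u2 *\<^sub>R GP l b1 y
        + w *\<^sub>R (PP l b1 y *\<^sub>R GP l b2 y - PP l b2 y *\<^sub>R GP l b1 y) = 0" using G by blast
    have "P1 y *\<^sub>R GP l b2 y - P2 y *\<^sub>R GP l b1 y = inverse w *\<^sub>R (u1 *\<^sub>R GP l b2 y - u2 *\<^sub>R GP l b1 y
        + w *\<^sub>R (PP l b1 y *\<^sub>R GP l b2 y - PP l b2 y *\<^sub>R GP l b1 y))"
      using wp by (simp add: wi P1_def P2_def scaleR_add_left scaleR_diff_right scaleR_add_right
          scaleR_diff_left divide_inverse algebra_simps)
    then show "P1 y *\<^sub>R GP l b2 y - P2 y *\<^sub>R GP l b1 y = 0" using e by simp
  qed
  have pb1: "poly_fun_deg_le l (PP l b1)" and pb2: "poly_fun_deg_le l (PP l b2)" by (auto simp: poly_iff)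
  have p1: "poly_fun_deg_le l P1" using poly_lin[OF pb1 pb1, of 1 0 "u1 / w"] by (simp add: P1_def add.commute)
  have p2: "poly_fun_deg_le l P2" using poly_lin[OF pb2 pb2, of 1 0 "u2 / w"] by (simp add: P2_def add.commute)
  have d1: "(P1 has_derivative (\<lambda>h. GP l b1 y \<bullet> h)) (at y)" for y
    using shifted_deriv[where t="u1 / w" and k=l and c=b1 and x=y and a=0] by (simp add: P1_def)
  have d2: "(P2 has_derivative (\<lambda>h. GP l b2 y \<bullet> h)) (at y)" for y
    using shifted_deriv[where t="u2 / w" and k=l and c=b2 and x=y and a=0] by (simp add: P2_def)
  have R1: "PP l b1 y = P1 y - u1 / w" and R2: "PP l b2 y = P2 y - u2 / w" for y
    by (simp_all add: P1_def P2_def)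
  show ?thesis
  proof (cases "\<forall>y\<in>ball 0 1. P1 y = 0 \<and> P2 y = 0")
    case True
    define L where "L = {vector [- (u1 / w), - (u2 / w)] + t *\<^sub>R (vector [1, 0] :: real^2) | t. True}"
    show ?thesis
    proof (intro exI conjI ballI)
      show "is_line L" unfolding L_def by (rule is_line_mk) simp
      fix y :: "real^'n" assume "y \<in> ball 0 1"
      then have "P1 y = 0" "P2 y = 0" using True by auto
      then have "pmap (PP l b1) (PP l b2) y = vector [- (u1 / w), - (u2 / w)] + 0 *\<^sub>R (vector [1, 0] :: real^2)"
        by (simp add: pmap_def R1 R2)
      then show "pmap (PP l b1) (PP l b2) y \<in> L" unfolding L_def by blast
    qed
  next
    case False
    then obtain y0 where y0: "y0 \<in> ball 0 1" and nz: "P1 y0 \<noteq> 0 \<or> P2 y0 \<noteq> 0" by blast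
    have rel: "P1 y0 * P2 z = P2 y0 * P1 z" for z
    proof (cases "P1 y0 \<noteq> 0")
      case True
      from core[OF p1 p2 d1 d2 sg y0 True] show ?thesis by simp
    next
      case False
      then have "P2 y0 \<noteq> 0" using nz by simp
      moreover have "\<forall>y\<in>ball 0 1. P2 y *\<^sub>R GP l b1 y - P1 y *\<^sub>R GP l b2 y = 0"
        using sg by (metis (no_types, lifting) diff_0 minus_diff_eq)
      ultimately have "P2 y0 * P1 z - P1 y0 * P2 z = 0"
        using core[OF p2 p1 d2 d1 _ y0] by blast
      then show ?thesis by simp
    qed
    define L where "L = {vector [- (u1 / w), - (u2 / w)] + t *\<^sub>R (vector [P1 y0, P2 y0] :: real^2) | t. True}"
    show ?thesis
    proof (intro exI conjI ballI)
      show "is_line L" unfolding L_def by (rule is_line_mk[OF nz])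
      fix y :: "real^'n" assume "y \<in> ball 0 1"
      from on_line2[OF nz rel[of y], of "u1 / w" "u2 / w"]
      show "pmap (PP l b1) (PP l b2) y \<in> L" by (simp add: pmap_def L_def R1 R2)
    qed
  qed
qed

lemma norm2_le: "norm (vector [a, b] :: real^2) \<le> \<bar>a\<bar> + \<bar>b\<bar>"
  using norm_le_l1_cart[of "vector [a, b] :: real^2"] by (simp add: sum_2)

lemma comp1_le: "\<bar>a\<bar> \<le> norm (vector [a, b] :: real^2)"
  using component_le_norm_cart[of "vector [a, b] :: real^2" 1] by simp

lemma comp2_le: "\<bar>b\<bar> \<le> norm (vector [a, b] :: real^2)"
  using component_le_norm_cart[of "vector [a, b] :: real^2" 2] by simp

lemma pmap_diff: "pmap p1 p2 x - pmap p1 p2 y = vector [p1 x - p1 y, p2 x - p2 y]"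
  by (simp add: pmap_def vec_eq_iff forall_2)

lemma reduce:
  fixes f :: "real^'n::finite \<Rightarrow> real"
  assumes C: "\<forall>c::('n \<Rightarrow> nat) \<Rightarrow> real. (\<forall>x\<in>ball 0 1. \<bar>PP l c x\<bar> \<le> 2) \<longrightarrow>
      (\<exists>c'. PP l c' = PP l c \<and> nrm l c' \<le> C)"
    and f: "poly_fun_deg_le l f" and osc: "\<forall>x\<in>ball cc 1. \<bar>f x - f cc\<bar> \<le> 2"
  shows "\<exists>b. nrm l b \<le> C \<and> PP l b 0 = 0 \<and> (\<forall>x. f x = f cc + PP l b (x - cc))
      \<and> (\<forall>x. grad f x = GP l b (x - cc))"
proof -
  obtain a where a: "(\<lambda>y. f (cc + y)) = PP l a" using poly_translate[OF f, of cc] by (auto simp: poly_iff)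
  define a' where "a' = (\<lambda>\<alpha>. 1 * a \<alpha> + (-1) * (if \<alpha> = (\<lambda>_. 0) then f cc else 0))"
  have a': "PP l a' y = f (cc + y) - f cc" for y
    unfolding a'_def PP_add PP_const using fun_cong[OF a, of y] by simp
  have "\<forall>x\<in>ball 0 1. \<bar>PP l a' x\<bar> \<le> 2"
  proof
    fix x :: "real^'n" assume "x \<in> ball 0 1"
    then have "cc + x \<in> ball cc 1" by (simp add: dist_norm)
    then show "\<bar>PP l a' x\<bar> \<le> 2" using osc a' by simp
  qed
  with C obtain b where b: "PP l b = PP l a'" "nrm l b \<le> C" by blast
  have rep: "\<forall>x. f x = f cc + PP l b (x - cc)"
  proof
    fix x show "f x = f cc + PP l b (x - cc)" using a'[of "x - cc"] b(1) by simp
  qed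
  then have feq: "f = (\<lambda>x. f cc + PP l b (x - cc))" by (intro ext) (rule rep[rule_format])
  have "\<forall>x. grad f x = GP l b (x - cc)"
  proof
    fix x
    show "grad f x = GP l b (x - cc)"
      by (subst feq, rule grad_eq, rule shifted_deriv)
  qed
  moreover have "PP l b 0 = 0" using a'[of 0] b(1) by simp
  ultimately show ?thesis using b(2) rep by blast
qed

definition Hyp :: "nat \<Rightarrow> real^'n::finite \<Rightarrow> (real^'n \<Rightarrow> real) \<Rightarrow> (real^'n \<Rightarrow> real) \<Rightarrow> bool" where
  "Hyp l c p1 p2 \<longleftrightarrow> poly_fun_deg_le l p1 \<and> poly_fun_deg_le l p2 \<and>
       (\<forall>x\<in>ball c 1. \<forall>y\<in>ball c 1. norm (pmap p1 p2 x - pmap p1 p2 y) \<le> 2) \<and>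
       (\<forall>L. is_line L \<longrightarrow> (SUP x\<in>ball c 1. infdist (pmap p1 p2 x) L) \<ge> 1/8)"

lemma Hyp_osc:
  assumes "Hyp l c p1 p2" "x \<in> ball c 1"
  shows "\<bar>p1 x - p1 c\<bar> \<le> 2" "\<bar>p2 x - p2 c\<bar> \<le> 2"
proof -
  have "c \<in> ball c 1" by simp
  then have "norm (pmap p1 p2 x - pmap p1 p2 c) \<le> 2" using assms unfolding Hyp_def by blast
  then have n: "norm (vector [p1 x - p1 c, p2 x - p2 c] :: real^2) \<le> 2" by (simp only: pmap_diff)
  show "\<bar>p1 x - p1 c\<bar> \<le> 2" using comp1_le[of "p1 x - p1 c" "p2 x - p2 c"] n by linarith
  show "\<bar>p2 x - p2 c\<bar> \<le> 2" using comp2_le[where a="p1 x - p1 c" and b="p2 x - p2 c"] n by linarith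
qed

lemma instance_rep:
  fixes p1 p2 :: "real^'n::finite \<Rightarrow> real"
  assumes C: "\<forall>c::('n \<Rightarrow> nat) \<Rightarrow> real. (\<forall>x\<in>ball 0 1. \<bar>PP l c x\<bar> \<le> 2) \<longrightarrow>
      (\<exists>c'. PP l c' = PP l c \<and> nrm l c' \<le> C)"
    and H: "Hyp l cc p1 p2"
  shows "\<exists>b1 b2. nrm l b1 \<le> C \<and> nrm l b2 \<le> C \<and> PP l b1 0 = 0 \<and> PP l b2 0 = 0 \<and>
     (\<forall>x. p1 x = p1 cc + PP l b1 (x - cc)) \<and> (\<forall>x. p2 x = p2 cc + PP l b2 (x - cc)) \<and>
     (\<forall>x. grad p1 x = GP l b1 (x - cc)) \<and> (\<forall>x. grad p2 x = GP l b2 (x - cc))"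
proof -
  have q: "poly_fun_deg_le l p1" "poly_fun_deg_le l p2" using H by (auto simp: Hyp_def)
  have o: "\<forall>x\<in>ball cc 1. \<bar>p1 x - p1 cc\<bar> \<le> 2" "\<forall>x\<in>ball cc 1. \<bar>p2 x - p2 cc\<bar> \<le> 2"
    using Hyp_osc[OF H] by auto
  obtain b1 where b1: "nrm l b1 \<le> C" "PP l b1 0 = 0" "\<forall>x. p1 x = p1 cc + PP l b1 (x - cc)"
      "\<forall>x. grad p1 x = GP l b1 (x - cc)"
    using reduce[OF C q(1) o(1)] by blast
  obtain b2 where b2: "nrm l b2 \<le> C" "PP l b2 0 = 0" "\<forall>x. p2 x = p2 cc + PP l b2 (x - cc)"
      "\<forall>x. grad p2 x = GP l b2 (x - cc)"
    using reduce[OF C q(2) o(2)] by blast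
  show ?thesis by (rule exI[of _ b1], rule exI[of _ b2]) (use b1 b2 in blast)
qed

lemma partA:
  fixes l :: nat
  assumes C: "\<forall>c::('n::finite \<Rightarrow> nat) \<Rightarrow> real. (\<forall>x\<in>ball 0 1. \<bar>PP l c x\<bar> \<le> 2) \<longrightarrow>
      (\<exists>c'. PP l c' = PP l c \<and> nrm l c' \<le> C)"
  shows "\<exists>\<gamma>>0. \<forall>(cc::real^'n) p1 p2. Hyp l cc p1 p2 \<longrightarrow>
     (\<exists>x\<in>ball cc 1. \<gamma> * (3 + \<bar>p1 cc\<bar> + \<bar>p2 cc\<bar>) \<le> norm (skew_grad p1 p2 x))"
proof (rule ccontr)
  assume neg: "\<not> ?thesis"
  have ex: "\<forall>m. \<exists>(cc::real^'n) p1 p2. Hyp l cc p1 p2 \<and> (\<forall>x\<in>ball cc 1. norm (skew_grad p1 p2 x)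
          < inverse (real (Suc m)) * (3 + \<bar>p1 cc\<bar> + \<bar>p2 cc\<bar>))"
  proof
    fix m
    have g: "inverse (real (Suc m)) > 0" by simp
    have "\<forall>\<gamma>>0. \<exists>(cc::real^'n) p1 p2. Hyp l cc p1 p2 \<and> (\<forall>x\<in>ball cc 1. norm (skew_grad p1 p2 x)
          < \<gamma> * (3 + \<bar>p1 cc\<bar> + \<bar>p2 cc\<bar>))" using neg by (auto simp: not_le)
    then show "\<exists>(cc::real^'n) p1 p2. Hyp l cc p1 p2 \<and> (\<forall>x\<in>ball cc 1. norm (skew_grad p1 p2 x)
          < inverse (real (Suc m)) * (3 + \<bar>p1 cc\<bar> + \<bar>p2 cc\<bar>))" using g by blast
  qed
  from choice[OF ex] obtain CC :: "nat \<Rightarrow> real^'n" where "\<forall>m. \<exists>p1 p2. Hyp l (CC m) p1 p2 \<and>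
      (\<forall>x\<in>ball (CC m) 1. norm (skew_grad p1 p2 x) < inverse (real (Suc m)) * (3 + \<bar>p1 (CC m)\<bar> + \<bar>p2 (CC m)\<bar>))"
    by blast
  from choice[OF this] obtain Q1 where "\<forall>m. \<exists>p2. Hyp l (CC m) (Q1 m) p2 \<and>
      (\<forall>x\<in>ball (CC m) 1. norm (skew_grad (Q1 m) p2 x) < inverse (real (Suc m)) * (3 + \<bar>Q1 m (CC m)\<bar> + \<bar>p2 (CC m)\<bar>))"
    by blast
  from choice[OF this] obtain Q2 where HS: "\<forall>m. Hyp l (CC m) (Q1 m) (Q2 m) \<and>
      (\<forall>x\<in>ball (CC m) 1. norm (skew_grad (Q1 m) (Q2 m) x) < inverse (real (Suc m)) * (3 + \<bar>Q1 m (CC m)\<bar> + \<bar>Q2 m (CC m)\<bar>))"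
    by blast
  have H: "\<And>m. Hyp l (CC m) (Q1 m) (Q2 m)" using HS by blast
  have S: "\<And>m x. x \<in> ball (CC m) 1 \<Longrightarrow> norm (skew_grad (Q1 m) (Q2 m) x)
          < inverse (real (Suc m)) * (3 + \<bar>Q1 m (CC m)\<bar> + \<bar>Q2 m (CC m)\<bar>)"
    using HS by blast
  have exb: "\<forall>m. \<exists>b1 b2. nrm l b1 \<le> C \<and> nrm l b2 \<le> C \<and> PP l b1 0 = 0 \<and> PP l b2 0 = 0 \<and>
     (\<forall>x. Q1 m x = Q1 m (CC m) + PP l b1 (x - CC m)) \<and> (\<forall>x. Q2 m x = Q2 m (CC m) + PP l b2 (x - CC m)) \<and>
     (\<forall>x. grad (Q1 m) x = GP l b1 (x - CC m)) \<and> (\<forall>x. grad (Q2 m) x = GP l b2 (x - CC m))"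
    using instance_rep[OF C H] by blast
  from choice[OF exb] obtain B1 where "\<forall>m. \<exists>b2. nrm l (B1 m) \<le> C \<and> nrm l b2 \<le> C \<and> PP l (B1 m) 0 = 0 \<and> PP l b2 0 = 0 \<and>
     (\<forall>x. Q1 m x = Q1 m (CC m) + PP l (B1 m) (x - CC m)) \<and> (\<forall>x. Q2 m x = Q2 m (CC m) + PP l b2 (x - CC m)) \<and>
     (\<forall>x. grad (Q1 m) x = GP l (B1 m) (x - CC m)) \<and> (\<forall>x. grad (Q2 m) x = GP l b2 (x - CC m))"
    by blast
  from choice[OF this] obtain B2 where BB: "\<forall>m. nrm l (B1 m) \<le> C \<and> nrm l (B2 m) \<le> C \<and> PP l (B1 m) 0 = 0 \<and> PP l (B2 m) 0 = 0 \<and>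
     (\<forall>x. Q1 m x = Q1 m (CC m) + PP l (B1 m) (x - CC m)) \<and> (\<forall>x. Q2 m x = Q2 m (CC m) + PP l (B2 m) (x - CC m)) \<and>
     (\<forall>x. grad (Q1 m) x = GP l (B1 m) (x - CC m)) \<and> (\<forall>x. grad (Q2 m) x = GP l (B2 m) (x - CC m))"
    by blast
  have B: "\<And>m. nrm l (B1 m) \<le> C" "\<And>m. nrm l (B2 m) \<le> C"
     "\<And>m. PP l (B1 m) 0 = 0" "\<And>m. PP l (B2 m) 0 = 0"
     "\<And>m x. Q1 m x = Q1 m (CC m) + PP l (B1 m) (x - CC m)"
     "\<And>m x. Q2 m x = Q2 m (CC m) + PP l (B2 m) (x - CC m)"
     "\<And>m x. grad (Q1 m) x = GP l (B1 m) (x - CC m)"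
     "\<And>m x. grad (Q2 m) x = GP l (B2 m) (x - CC m)"
    using BB by blast+
  define v1 where "v1 m = Q1 m (CC m)" for m
  define v2 where "v2 m = Q2 m (CC m)" for m
  define D where "D m = 3 + \<bar>v1 m\<bar> + \<bar>v2 m\<bar>" for m
  define u1 where "u1 m = v1 m / D m" for m
  define u2 where "u2 m = v2 m / D m" for m
  define w where "w m = 1 / D m" for m
  have Dpos: "D m > 0" for m by (simp add: D_def add_pos_nonneg)
  define E where "E m y = u1 m *\<^sub>R GP l (B2 m) y - u2 m *\<^sub>R GP l (B1 m) y
      + w m *\<^sub>R (PP l (B1 m) y *\<^sub>R GP l (B2 m) y - PP l (B2 m) y *\<^sub>R GP l (B1 m) y)" for m y
  have Ebound: "norm (E m y) < inverse (real (Suc m))" if y: "y \<in> ball 0 1" for m y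
  proof -
    define x where "x = CC m + y"
    have x: "x \<in> ball (CC m) 1" using y by (simp add: x_def dist_norm)
    have "skew_grad (Q1 m) (Q2 m) x = (v1 m + PP l (B1 m) y) *\<^sub>R GP l (B2 m) y
       - (v2 m + PP l (B2 m) y) *\<^sub>R GP l (B1 m) y"
      unfolding skew_grad_def using B(5,6,7,8)[of m x] by (simp add: x_def v1_def v2_def)
    also have "\<dots> = D m *\<^sub>R E m y"
      using Dpos[of m] by (simp add: E_def u1_def u2_def w_def scaleR_add_left scaleR_diff_right
          scaleR_add_right scaleR_diff_left algebra_simps)
    finally have "norm (skew_grad (Q1 m) (Q2 m) x) = D m * norm (E m y)"
      using Dpos[of m] by simp
    with S[OF x] have "D m * norm (E m y) < inverse (real (Suc m)) * D m"
      by (simp add: D_def v1_def v2_def)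
    then show ?thesis using Dpos[of m] by (simp add: mult.commute)
  qed
  have absD: "\<bar>D m\<bar> = D m" for m using Dpos[of m] by simp
  have u1b: "\<bar>u1 m\<bar> \<le> 1" for m
  proof -
    have "\<bar>v1 m\<bar> \<le> D m" unfolding D_def by simp
    then show ?thesis using Dpos[of m] by (simp add: u1_def abs_divide absD)
  qed
  have u2b: "\<bar>u2 m\<bar> \<le> 1" for m
  proof -
    have "\<bar>v2 m\<bar> \<le> D m" unfolding D_def by simp
    then show ?thesis using Dpos[of m] by (simp add: u2_def abs_divide absD)
  qed
  have wb: "\<bar>w m\<bar> \<le> 1" for m
  proof -
    have "1 \<le> D m" unfolding D_def by simp
    then show ?thesis using Dpos[of m] by (simp add: w_def abs_divide absD)
  qed
  have sum1: "\<bar>u1 m\<bar> + \<bar>u2 m\<bar> + 3 * w m = 1" for m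
  proof -
    have "\<bar>u1 m\<bar> + \<bar>u2 m\<bar> + 3 * w m = (\<bar>v1 m\<bar> + \<bar>v2 m\<bar> + 3) / D m"
      by (simp add: u1_def u2_def w_def abs_divide absD add_divide_distrib)
    also have "\<dots> = 1" using Dpos[of m] by (simp add: D_def add.commute add.left_commute)
    finally show ?thesis .
  qed
  have wnn: "w m \<ge> 0" for m using Dpos[of m] by (simp add: w_def)
  define X where "X m = (\<lambda>(\<alpha>, j). if j = (0::nat) then B1 m \<alpha> else if j = 1 then B2 m \<alpha>
      else if j = 2 then u1 m else if j = 3 then u2 m else w m)" for m
  define A :: "(('n \<Rightarrow> nat) \<times> nat) set" where "A = Ix l \<times> {..(4::nat)}"
  have fA: "finite A" by (simp add: A_def finite_Ix)
  have Xb: "\<bar>X m a\<bar> \<le> max C 1" if aA: "a \<in> A" for m a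
  proof -
    obtain \<alpha> j where a: "a = (\<alpha>, j)" and \<alpha>: "\<alpha> \<in> Ix l" using aA by (auto simp: A_def)
    have "\<bar>B1 m \<alpha>\<bar> \<le> C" using coeff_le_nrm[OF \<alpha>, of "B1 m"] B(1)[of m] by linarith
    moreover have "\<bar>B2 m \<alpha>\<bar> \<le> C" using coeff_le_nrm[OF \<alpha>, of "B2 m"] B(2)[of m] by linarith
    ultimately show ?thesis using u1b[of m] u2b[of m] wb[of m] by (auto simp: X_def a)
  qed
  obtain r Lm where r: "strict_mono r" and Lm: "\<forall>a\<in>A. (\<lambda>m. X (r m) a) \<longlonglongrightarrow> Lm a"
    using BW_finite[OF fA, where x=X and B="max C 1"] Xb by blast
  define z :: "'n \<Rightarrow> nat" where "z = (\<lambda>_. 0)"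
  have zI: "z \<in> Ix l" by (simp add: z_def zero_Ix)
  define b1s where "b1s = (\<lambda>\<alpha>. Lm (\<alpha>, 0))"
  define b2s where "b2s = (\<lambda>\<alpha>. Lm (\<alpha>, 1))"
  define u1s where "u1s = Lm (z, 2)"
  define u2s where "u2s = Lm (z, 3)"
  define ws where "ws = Lm (z, 4)"
  have cb1: "\<forall>\<alpha>\<in>Ix l. (\<lambda>m. B1 (r m) \<alpha>) \<longlonglongrightarrow> b1s \<alpha>"
  proof
    fix \<alpha> :: "'n \<Rightarrow> nat" assume "\<alpha> \<in> Ix l"
    then have "(\<alpha>, 0) \<in> A" by (simp add: A_def)
    then show "(\<lambda>m. B1 (r m) \<alpha>) \<longlonglongrightarrow> b1s \<alpha>" using Lm by (auto simp: X_def b1s_def)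
  qed
  have cb2: "\<forall>\<alpha>\<in>Ix l. (\<lambda>m. B2 (r m) \<alpha>) \<longlonglongrightarrow> b2s \<alpha>"
  proof
    fix \<alpha> :: "'n \<Rightarrow> nat" assume "\<alpha> \<in> Ix l"
    then have "(\<alpha>, 1) \<in> A" by (simp add: A_def)
    then show "(\<lambda>m. B2 (r m) \<alpha>) \<longlonglongrightarrow> b2s \<alpha>" using Lm by (auto simp: X_def b2s_def)
  qed
  have cu1: "(\<lambda>m. u1 (r m)) \<longlonglongrightarrow> u1s"
  proof -
    have "(z, 2) \<in> A" using zI by (simp add: A_def)
    then show ?thesis using Lm by (auto simp: X_def u1s_def)
  qed
  have cu2: "(\<lambda>m. u2 (r m)) \<longlonglongrightarrow> u2s"
  proof -
    have "(z, 3) \<in> A" using zI by (simp add: A_def)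
    then show ?thesis using Lm by (auto simp: X_def u2s_def)
  qed
  have cw: "(\<lambda>m. w (r m)) \<longlonglongrightarrow> ws"
  proof -
    have "(z, 4) \<in> A" using zI by (simp add: A_def)
    then show ?thesis using Lm by (auto simp: X_def ws_def)
  qed
  have ws0: "0 \<le> ws" using cw wnn by (intro LIMSEQ_le_const) auto
  have "(\<lambda>m. \<bar>u1 (r m)\<bar> + \<bar>u2 (r m)\<bar> + 3 * w (r m)) \<longlonglongrightarrow> \<bar>u1s\<bar> + \<bar>u2s\<bar> + 3 * ws"
    by (intro tendsto_intros cu1 cu2 cw)
  then have s1: "\<bar>u1s\<bar> + \<bar>u2s\<bar> + 3 * ws = 1" using sum1 by (simp add: LIMSEQ_const_iff)
  have us: "ws = 0 \<Longrightarrow> u1s \<noteq> 0 \<or> u2s \<noteq> 0" using s1 by auto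
  have z1: "PP l b1s 0 = 0"
    using PP_tendsto[OF cb1, of 0] B(3) by (simp add: LIMSEQ_const_iff)
  have z2: "PP l b2s 0 = 0"
    using PP_tendsto[OF cb2, of 0] B(4) by (simp add: LIMSEQ_const_iff)
  have Gs: "\<forall>y\<in>ball 0 1. u1s *\<^sub>R GP l b2s y - u2s *\<^sub>R GP l b1s y
        + ws *\<^sub>R (PP l b1s y *\<^sub>R GP l b2s y - PP l b2s y *\<^sub>R GP l b1s y) = 0"
  proof
    fix y :: "real^'n" assume y: "y \<in> ball 0 1"
    have "(\<lambda>m. E (r m) y) \<longlonglongrightarrow> u1s *\<^sub>R GP l b2s y - u2s *\<^sub>R GP l b1s y
        + ws *\<^sub>R (PP l b1s y *\<^sub>R GP l b2s y - PP l b2s y *\<^sub>R GP l b1s y)"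
      unfolding E_def
      by (intro tendsto_add tendsto_diff tendsto_scaleR cu1 cu2 cw GP_tendsto PP_tendsto cb1 cb2)
    moreover have "(\<lambda>m. E (r m) y) \<longlonglongrightarrow> 0"
    proof (rule Lim_null_comparison)
      show "\<forall>\<^sub>F m in sequentially. norm (E (r m) y) \<le> 1 * inverse (real (Suc m))"
      proof (rule always_eventually, rule allI)
        fix m
        have "m \<le> r m" using r by (rule seq_suble)
        then have inv: "inverse (real (Suc (r m))) \<le> inverse (real (Suc m))"
          by (intro le_imp_inverse_le) auto
        show "norm (E (r m) y) \<le> 1 * inverse (real (Suc m))" using Ebound[OF y, of "r m"] inv by linarith
      qed
      show "(\<lambda>m. 1 * inverse (real (Suc m))) \<longlonglongrightarrow> 0" using inv_Suc_tendsto[of 0 1] by simp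
    qed
    ultimately show "u1s *\<^sub>R GP l b2s y - u2s *\<^sub>R GP l b1s y
        + ws *\<^sub>R (PP l b1s y *\<^sub>R GP l b2s y - PP l b2s y *\<^sub>R GP l b1s y) = 0"
      using LIMSEQ_unique by blast
  qed
  obtain L where L: "is_line L" and RL: "\<forall>y\<in>ball 0 1. pmap (PP l b1s) (PP l b2s) y \<in> L"
    using nondeg[OF z1 z2 ws0 us Gs] by blast
  obtain a vv where vv: "vv \<noteq> 0" and La: "L = {a + t *\<^sub>R vv | t. True}" using L by (auto simp: is_line_def)
  define e where "e m = nrm l (\<lambda>\<alpha>. B1 (r m) \<alpha> - b1s \<alpha>) + nrm l (\<lambda>\<alpha>. B2 (r m) \<alpha> - b2s \<alpha>)" for m
  have e0: "e \<longlonglongrightarrow> 0"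
    using tendsto_add[OF nrm_diff_tendsto[OF cb1] nrm_diff_tendsto[OF cb2]] by (simp add: e_def[abs_def])
  have ge: "1/8 \<le> e m" for m
  proof -
    define k where "k = r m"
    define Lk where "Lk = {(vector [v1 k, v2 k] + a) + t *\<^sub>R vv | t. True}"
    have "is_line Lk" unfolding is_line_def Lk_def using vv by blast
    then have "1/8 \<le> (SUP x\<in>ball (CC k) 1. infdist (pmap (Q1 k) (Q2 k) x) Lk)"
      using H[of k] by (simp add: Hyp_def)
    also have "\<dots> \<le> e m"
    proof (rule cSUP_least)
      show "ball (CC k) 1 \<noteq> {}" by simp
      fix x assume x: "x \<in> ball (CC k) 1"
      define y where "y = x - CC k"
      have y: "y \<in> ball 0 1" using x by (simp add: y_def dist_norm norm_minus_commute)
      then have ny: "norm y \<le> 1" by simp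
      obtain t where t: "pmap (PP l b1s) (PP l b2s) y = a + t *\<^sub>R vv" using RL y La by blast
      define q where "q = vector [v1 k, v2 k] + pmap (PP l b1s) (PP l b2s) y"
      have qL: "q \<in> Lk" unfolding q_def t Lk_def by (rule CollectI, rule exI[of _ t]) (simp add: algebra_simps)
      have e1: "Q1 k x = v1 k + PP l (B1 k) y" unfolding v1_def y_def by (rule B(5))
      have e2: "Q2 k x = v2 k + PP l (B2 k) y" unfolding v2_def y_def by (rule B(6))
      have "pmap (Q1 k) (Q2 k) x - q = vector [PP l (B1 k) y - PP l b1s y, PP l (B2 k) y - PP l b2s y]"
        unfolding q_def pmap_def e1 e2 by (simp add: vec_eq_iff forall_2)
      then have "dist (pmap (Q1 k) (Q2 k) x) q \<le> \<bar>PP l (B1 k) y - PP l b1s y\<bar> + \<bar>PP l (B2 k) y - PP l b2s y\<bar>"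
        using norm2_le by (simp add: dist_norm)
      also have "\<dots> \<le> e m"
        using PP_diff_le[OF ny, of l "B1 k" b1s] PP_diff_le[OF ny, of l "B2 k" b2s]
        by (simp add: e_def k_def)
      finally show "infdist (pmap (Q1 k) (Q2 k) x) Lk \<le> e m"
        using infdist_le[OF qL, of "pmap (Q1 k) (Q2 k) x"] by linarith
    qed
    finally show ?thesis .
  qed
  have "eventually (\<lambda>m. e m < 1/8) sequentially" using e0 by (rule order_tendstoD) simp
  then show False using ge by (auto simp: not_less[symmetric] dest: eventually_happens)
qed

theorem lemma4p3:
  fixes l :: nat
  assumes "l \<ge> 1"
  shows "\<exists>\<gamma> M :: real. 0 < \<gamma> \<and> \<gamma> < 1 \<and> M \<ge> 1 \<and>
    (\<forall>(c :: real^'n) p1 p2.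
       poly_fun_deg_le l p1 \<and> poly_fun_deg_le l p2 \<and>
       (\<forall>x\<in>ball c 1. \<forall>y\<in>ball c 1. norm (pmap p1 p2 x - pmap p1 p2 y) \<le> 2) \<and>
       (\<forall>L. is_line L \<longrightarrow> (SUP x\<in>ball c 1. infdist (pmap p1 p2 x) L) \<ge> 1/8)
     \<longrightarrow>
       (SUP x\<in>ball c 1. norm (skew_grad p1 p2 x))
          \<ge> \<gamma> * (1 + (SUP x\<in>ball c 1. norm (pmap p1 p2 x))) \<and>
       (\<forall>x\<in>ball c 1. \<forall>i\<in>{p1, p2}. norm (grad i x) \<le> M))"
proof -
  obtain C where C: "\<forall>c::('n \<Rightarrow> nat) \<Rightarrow> real. (\<forall>x\<in>ball 0 1. \<bar>PP l c x\<bar> \<le> 2) \<longrightarrow>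
      (\<exists>c'. PP l c' = PP l c \<and> nrm l c' \<le> C)"
    using norm_equiv[of l] by blast
  obtain \<gamma>0 where g0: "\<gamma>0 > 0" and A: "\<forall>(cc::real^'n) p1 p2. Hyp l cc p1 p2 \<longrightarrow>
     (\<exists>x\<in>ball cc 1. \<gamma>0 * (3 + \<bar>p1 cc\<bar> + \<bar>p2 cc\<bar>) \<le> norm (skew_grad p1 p2 x))"
    using partA[OF C] by blast
  define M where "M = max 1 (C * real l)"
  define \<gamma> where "\<gamma> = min \<gamma>0 (1/2)"
  have M1: "M \<ge> 1" by (simp add: M_def)
  have gp: "0 < \<gamma>" "\<gamma> < 1" "\<gamma> \<le> \<gamma>0" using g0 by (auto simp: \<gamma>_def)
  have main: "\<forall>(cc :: real^'n) p1 p2.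
       poly_fun_deg_le l p1 \<and> poly_fun_deg_le l p2 \<and>
       (\<forall>x\<in>ball cc 1. \<forall>y\<in>ball cc 1. norm (pmap p1 p2 x - pmap p1 p2 y) \<le> 2) \<and>
       (\<forall>L. is_line L \<longrightarrow> (SUP x\<in>ball cc 1. infdist (pmap p1 p2 x) L) \<ge> 1/8)
     \<longrightarrow>
       (SUP x\<in>ball cc 1. norm (skew_grad p1 p2 x))
          \<ge> \<gamma> * (1 + (SUP x\<in>ball cc 1. norm (pmap p1 p2 x))) \<and>
       (\<forall>x\<in>ball cc 1. \<forall>i\<in>{p1, p2}. norm (grad i x) \<le> M)"
  proof (intro allI impI)
    fix cc :: "real^'n" and p1 p2
    assume hyp: "poly_fun_deg_le l p1 \<and> poly_fun_deg_le l p2 \<and>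
       (\<forall>x\<in>ball cc 1. \<forall>y\<in>ball cc 1. norm (pmap p1 p2 x - pmap p1 p2 y) \<le> 2) \<and>
       (\<forall>L. is_line L \<longrightarrow> (SUP x\<in>ball cc 1. infdist (pmap p1 p2 x) L) \<ge> 1/8)"
    then have H: "Hyp l cc p1 p2" by (simp add: Hyp_def)
    obtain b1 b2 where b: "nrm l b1 \<le> C" "nrm l b2 \<le> C"
      "\<forall>x. grad p1 x = GP l b1 (x - cc)" "\<forall>x. grad p2 x = GP l b2 (x - cc)"
      using instance_rep[OF C H] by blast
    have gb1: "norm (grad p1 x) \<le> M" and gb2: "norm (grad p2 x) \<le> M" if x: "x \<in> ball cc 1" for x
    proof -
      have nx: "norm (x - cc) \<le> 1" using x by (simp add: dist_norm norm_minus_commute)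
      have "nrm l b1 * real l \<le> C * real l" "nrm l b2 * real l \<le> C * real l"
        using b(1,2) by (auto intro: mult_right_mono)
      moreover have "C * real l \<le> M" by (simp add: M_def)
      ultimately show "norm (grad p1 x) \<le> M" "norm (grad p2 x) \<le> M"
        using GP_bound[OF nx, of l b1] GP_bound[OF nx, of l b2] b(3,4) by (auto simp del: of_nat_le_iff)
    qed
    have partB: "\<forall>x\<in>ball cc 1. \<forall>i\<in>{p1, p2}. norm (grad i x) \<le> M" using gb1 gb2 by auto
    define v1 where "v1 = p1 cc"
    define v2 where "v2 = p2 cc"
    have pb1: "\<bar>p1 x\<bar> \<le> \<bar>v1\<bar> + 2" and pb2: "\<bar>p2 x\<bar> \<le> \<bar>v2\<bar> + 2" if x: "x \<in> ball cc 1" for x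
      using Hyp_osc[OF H x] by (auto simp: v1_def v2_def)
    have SGb: "norm (skew_grad p1 p2 x) \<le> (\<bar>v1\<bar> + 2) * M + (\<bar>v2\<bar> + 2) * M" if x: "x \<in> ball cc 1" for x
    proof -
      have "norm (skew_grad p1 p2 x) \<le> \<bar>p1 x\<bar> * norm (grad p2 x) + \<bar>p2 x\<bar> * norm (grad p1 x)"
        unfolding skew_grad_def using norm_triangle_ineq4 by (metis norm_scaleR)
      also have "\<dots> \<le> (\<bar>v1\<bar> + 2) * M + (\<bar>v2\<bar> + 2) * M"
        by (intro add_mono mult_mono pb1 pb2 gb1 gb2 x) auto
      finally show ?thesis .
    qed
    have bddSG: "bdd_above ((\<lambda>x. norm (skew_grad p1 p2 x)) ` ball cc 1)"
      using SGb by (intro bdd_aboveI2) auto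
    have cc: "cc \<in> ball cc 1" by simp
    have Pb: "norm (pmap p1 p2 x) \<le> \<bar>v1\<bar> + \<bar>v2\<bar> + 2" if x: "x \<in> ball cc 1" for x
    proof -
      have "norm (pmap p1 p2 x) \<le> norm (pmap p1 p2 cc) + norm (pmap p1 p2 x - pmap p1 p2 cc)"
        by (rule norm_triangle_sub)
      moreover have "norm (pmap p1 p2 cc) \<le> \<bar>v1\<bar> + \<bar>v2\<bar>"
        unfolding pmap_def v1_def v2_def by (rule norm2_le)
      moreover have "norm (pmap p1 p2 x - pmap p1 p2 cc) \<le> 2" using hyp x cc by blast
      ultimately show ?thesis by linarith
    qed
    have bddP: "bdd_above ((\<lambda>x. norm (pmap p1 p2 x)) ` ball cc 1)"
      using Pb by (intro bdd_aboveI2) auto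
    define Sp where "Sp = (SUP x\<in>ball cc 1. norm (pmap p1 p2 x))"
    have Sp1: "Sp \<le> \<bar>v1\<bar> + \<bar>v2\<bar> + 2" unfolding Sp_def by (rule cSUP_least) (use Pb in auto)
    have Sp0: "0 \<le> Sp" unfolding Sp_def
      using cSUP_upper[OF cc bddP] norm_ge_zero order_trans by blast
    have "\<exists>x\<in>ball cc 1. \<gamma>0 * (3 + \<bar>p1 cc\<bar> + \<bar>p2 cc\<bar>) \<le> norm (skew_grad p1 p2 x)"
      using A H by blast
    then obtain x0 where x0: "x0 \<in> ball cc 1" and x0b: "\<gamma>0 * (3 + \<bar>v1\<bar> + \<bar>v2\<bar>) \<le> norm (skew_grad p1 p2 x0)"
      unfolding v1_def v2_def by blast
    have "\<gamma> * (1 + Sp) \<le> \<gamma>0 * (1 + Sp)" using gp Sp0 by (intro mult_right_mono) auto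
    also have "\<dots> \<le> \<gamma>0 * (3 + \<bar>v1\<bar> + \<bar>v2\<bar>)" using g0 Sp1 by (intro mult_left_mono) auto
    also have "\<dots> \<le> norm (skew_grad p1 p2 x0)" by (rule x0b)
    also have "\<dots> \<le> (SUP x\<in>ball cc 1. norm (skew_grad p1 p2 x))" by (rule cSUP_upper[OF x0 bddSG])
    finally have "(SUP x\<in>ball cc 1. norm (skew_grad p1 p2 x)) \<ge> \<gamma> * (1 + (SUP x\<in>ball cc 1. norm (pmap p1 p2 x)))"
      by (simp add: Sp_def)
    then show "(SUP x\<in>ball cc 1. norm (skew_grad p1 p2 x)) \<ge> \<gamma> * (1 + (SUP x\<in>ball cc 1. norm (pmap p1 p2 x))) \<and>
       (\<forall>x\<in>ball cc 1. \<forall>i\<in>{p1, p2}. norm (grad i x) \<le> M)" using partB by blast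
  qed
  show ?thesis using gp M1 main by blast
qed

end
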